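(* Let $G$ be a finite simple graph with $m$ edges and maximum degree $\Delta$, such that each connected component of $G$ has at least one edge. Then $$ M_1(G) \le \max \big\{2\Delta^2 +m^2 +(6-2\Delta) m - 2\Delta -4\,,\; 2\Delta^2 +m^2 +(4-2\Delta) m + 4 \,,\; m(m-1) \big\}, $$ where $M_1(G)=\sum_{u\in V(G)} d_u^2$ is the first Zagreb index.
   Context: $d_u$ denotes the degree of vertex $u$. The first Zagreb index is $M_1(G)=\sum_{uv\in E(G)}(d_u+d_v)=\sum_{u\in V(G)}d_u^2$. *)

theory Defs
  imports Main
begin

definition simple_graph :: "'a set \<Rightarrow> 'a set set \<Rightarrow> bool" where
  "simple_graph V E \<longleftrightarrow> finite V \<and> (\<forall>e\<in>E. e \<subseteq> V \<and> card e = 2)"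

definition degree :: "'a set set \<Rightarrow> 'a \<Rightarrow> nat" where
  "degree E u = card {e \<in> E. u \<in> e}"

definition max_degree :: "'a set \<Rightarrow> 'a set set \<Rightarrow> nat" where
  "max_degree V E = Max (insert 0 (degree E ` V))"

definition first_zagreb :: "'a set \<Rightarrow> 'a set set \<Rightarrow> nat" where
  "first_zagreb V E = (\<Sum>u\<in>V. (degree E u)^2)"

definition adj :: "'a set set \<Rightarrow> 'a \<Rightarrow> 'a \<Rightarrow> bool" where
  "adj E u v \<longleftrightarrow> {u, v} \<in> E"

definition reachable :: "'a set set \<Rightarrow> 'a \<Rightarrow> 'a \<Rightarrow> bool" where
  "reachable E u v \<longleftrightarrow> (adj E)\<^sup>*\<^sup>* u v"

definition component :: "'a set \<Rightarrow> 'a set set \<Rightarrow> 'a \<Rightarrow> 'a set" where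
  "component V E v = {u \<in> V. reachable E v u}"

definition components :: "'a set \<Rightarrow> 'a set set \<Rightarrow> 'a set set" where
  "components V E = component V E ` V"

end

theory Submission
  imports Defs
begin

lemma card_ind_sum:
  assumes "finite V"
  shows "(\<Sum>v\<in>V. (if P v then 1 else 0::nat)) = card {v\<in>V. P v}"
  using assms by (simp add: sum.If_cases Int_def)

lemma degree_sum:
  assumes "finite E"
  shows "degree E v = (\<Sum>e\<in>E. (if v \<in> e then 1 else 0::nat))"
  using assms unfolding degree_def by (simp add: card_ind_sum)

lemma zagreb_pairs:
  assumes "simple_graph V E"
  shows "first_zagreb V E = (\<Sum>e\<in>E. \<Sum>f\<in>E. card (e \<inter> f))"
proof -
  have fV: "finite V" using assms by (simp add: simple_graph_def)
  have sub: "\<forall>e\<in>E. e \<subseteq> V" using assms by (simp add: simple_graph_def)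
  hence "E \<subseteq> Pow V" by blast
  hence fE: "finite E" using fV finite_subset by blast
  have "first_zagreb V E = (\<Sum>v\<in>V. \<Sum>e\<in>E. \<Sum>f\<in>E. (if v \<in> e then 1 else 0::nat) * (if v \<in> f then 1 else 0))"
    unfolding first_zagreb_def power2_eq_square degree_sum[OF fE] by (simp add: sum_product)
  also have "\<dots> = (\<Sum>e\<in>E. \<Sum>v\<in>V. \<Sum>f\<in>E. (if v \<in> e then 1 else 0::nat) * (if v \<in> f then 1 else 0))"
    by (rule sum.swap)
  also have "\<dots> = (\<Sum>e\<in>E. \<Sum>f\<in>E. \<Sum>v\<in>V. (if v \<in> e then 1 else 0::nat) * (if v \<in> f then 1 else 0))"
    by (simp add: sum.swap[of _ V])
  also have "\<dots> = (\<Sum>e\<in>E. \<Sum>f\<in>E. card (e \<inter> f))"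
  proof (intro sum.cong refl)
    fix e f assume "e \<in> E" "f \<in> E"
    hence "e \<subseteq> V" using sub by blast
    have "(\<Sum>v\<in>V. (if v \<in> e then 1 else 0::nat) * (if v \<in> f then 1 else 0))
        = (\<Sum>v\<in>V. (if v \<in> e \<inter> f then 1 else 0::nat))"
      by (intro sum.cong) auto
    also have "\<dots> = card {v\<in>V. v \<in> e \<inter> f}" using fV by (rule card_ind_sum)
    also have "{v\<in>V. v \<in> e \<inter> f} = e \<inter> f" using \<open>e \<subseteq> V\<close> by blast
    finally show "(\<Sum>v\<in>V. (if v \<in> e then 1 else 0::nat) * (if v \<in> f then 1 else 0)) = card (e \<inter> f)" .
  qed
  finally show ?thesis .
qed

lemma inter_le1:
  assumes "card e = 2" "card f = 2" "e \<noteq> f"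
  shows "card (e \<inter> f) \<le> 1"
proof (rule ccontr)
  assume "\<not> ?thesis"
  hence c: "card (e \<inter> f) \<ge> 2" by simp
  have fe: "finite e" "finite f" using assms by (auto intro: card_ge_0_finite)
  have "e \<inter> f = e" using c assms fe
    by (metis Int_lower1 card_seteq)
  moreover have "e \<inter> f = f" using c assms fe
    by (metis Int_lower2 card_seteq)
  ultimately show False using assms by simp
qed

lemma block_bound:
  assumes "finite A" "\<forall>e\<in>A. card e = 2"
  shows "(\<Sum>e\<in>A. \<Sum>f\<in>A. card (e \<inter> f)) \<le> card A * (card A + 1)"
proof -
  have "(\<Sum>f\<in>A. card (e \<inter> f)) \<le> card A + 1" if "e \<in> A" for e
  proof -
    have "(\<Sum>f\<in>A. card (e \<inter> f)) = card (e \<inter> e) + (\<Sum>f\<in>A-{e}. card (e \<inter> f))"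
      using assms(1) that by (simp add: sum.remove)
    also have "(\<Sum>f\<in>A-{e}. card (e \<inter> f)) \<le> (\<Sum>f\<in>A-{e}. 1)"
      using assms that by (intro sum_mono inter_le1) auto
    also have "card (e \<inter> e) = 2" using assms that by simp
    finally show ?thesis using assms(1) that
      by (simp add: card_Diff_singleton) (metis Suc_pred card_gt_0_iff empty_iff le_add_diff_inverse2 add.commute)
  qed
  hence "(\<Sum>e\<in>A. \<Sum>f\<in>A. card (e \<inter> f)) \<le> (\<Sum>e\<in>A. card A + 1)" by (intro sum_mono) auto
  thus ?thesis by simp
qed

lemma cross_bound:
  assumes fE: "finite E" and E2: "\<forall>e\<in>E. card e = 2" and "f \<in> E" "u \<notin> f"
  shows "(\<Sum>e\<in>{e\<in>E. u \<in> e}. card (e \<inter> f)) \<le> 2"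
proof -
  let ?S = "{e\<in>E. u \<in> e}"
  have ff: "finite f" using E2 \<open>f \<in> E\<close> by (auto intro: card_ge_0_finite)
  have "(\<Sum>e\<in>?S. card (e \<inter> f)) = (\<Sum>e\<in>?S. \<Sum>a\<in>f. (if a \<in> e then 1 else 0::nat))"
  proof (intro sum.cong refl)
    fix e assume "e \<in> ?S"
    have "(\<Sum>a\<in>f. (if a \<in> e then 1 else 0::nat)) = card {a\<in>f. a \<in> e}" using ff by (rule card_ind_sum)
    also have "{a\<in>f. a \<in> e} = e \<inter> f" by blast
    finally show "card (e \<inter> f) = (\<Sum>a\<in>f. (if a \<in> e then 1 else 0::nat))" by simp
  qed
  also have "\<dots> = (\<Sum>a\<in>f. \<Sum>e\<in>?S. (if a \<in> e then 1 else 0::nat))" by (rule sum.swap)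
  also have "\<dots> \<le> (\<Sum>a\<in>f. 1)"
  proof (intro sum_mono)
    fix a assume "a \<in> f"
    hence "a \<noteq> u" using \<open>u \<notin> f\<close> by blast
    have fS: "finite ?S" using fE by simp
    have "(\<Sum>e\<in>?S. (if a \<in> e then 1 else 0::nat)) = card {e\<in>?S. a \<in> e}" using fS by (rule card_ind_sum)
    also have "{e\<in>?S. a \<in> e} \<subseteq> {{u, a}}"
    proof
      fix e assume "e \<in> {e\<in>?S. a \<in> e}"
      hence "e \<in> E" "u \<in> e" "a \<in> e" by auto
      hence "card e = 2" using E2 by blast
      then obtain x y where "e = {x, y}" "x \<noteq> y" by (auto simp: card_2_iff)
      thus "e \<in> {{u, a}}" using \<open>u \<in> e\<close> \<open>a \<in> e\<close> \<open>a \<noteq> u\<close> by auto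
    qed
    hence "card {e\<in>?S. a \<in> e} \<le> card {{u, a}}" by (intro card_mono) auto
    finally show "(\<Sum>e\<in>?S. (if a \<in> e then 1 else 0::nat)) \<le> 1" by simp
  qed
  also have "\<dots> = 2" using E2 \<open>f \<in> E\<close> by simp
  finally show ?thesis .
qed

theorem theorem2p1:
  fixes V :: "'a set" and E :: "'a set set"
  assumes "simple_graph V E"
    and "\<forall>C\<in>components V E. \<exists>e\<in>E. e \<subseteq> C"
  shows "int (first_zagreb V E) \<le>
    (let m = int (card E); \<Delta> = int (max_degree V E) in
      max (2*\<Delta>^2 + m^2 + (6 - 2*\<Delta>)*m - 2*\<Delta> - 4)
        (max (2*\<Delta>^2 + m^2 + (4 - 2*\<Delta>)*m + 4) (m*(m - 1))))"
proof -
  have fV: "finite V" using assms(1) by (simp add: simple_graph_def)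
  have sub: "\<forall>e\<in>E. e \<subseteq> V" using assms(1) by (simp add: simple_graph_def)
  hence "E \<subseteq> Pow V" by blast
  hence fE: "finite E" using fV finite_subset by blast
  have E2: "\<forall>e\<in>E. card e = 2" using assms(1) by (simp add: simple_graph_def)
  let ?g = "\<lambda>e f. card (e \<inter> f)"
  have Z: "first_zagreb V E = (\<Sum>e\<in>E. \<Sum>f\<in>E. ?g e f)" by (rule zagreb_pairs[OF assms(1)])
  show ?thesis
  proof (cases "E = {}")
    case True
    hence "first_zagreb V E = 0" using Z by simp
    thus ?thesis using True by (simp add: Let_def)
  next
    case False
    then obtain e0 where "e0 \<in> E" by blast
    hence "card e0 = 2" using E2 by blast
    then obtain a where "a \<in> e0" by (auto simp: card_2_iff)
    have aV: "a \<in> V" using sub \<open>e0 \<in> E\<close> \<open>a \<in> e0\<close> by blast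
    have "degree E a \<ge> 1" unfolding degree_def using fE \<open>e0 \<in> E\<close> \<open>a \<in> e0\<close>
    proof -
      have "e0 \<in> {e\<in>E. a \<in> e}" using \<open>e0 \<in> E\<close> \<open>a \<in> e0\<close> by simp
      moreover have "finite {e\<in>E. a \<in> e}" using fE by simp
      ultimately have "card {e\<in>E. a \<in> e} > 0" using card_gt_0_iff by blast
      thus "1 \<le> card {e\<in>E. a \<in> e}" by simp
    qed
    have fin: "finite (insert 0 (degree E ` V))" using fV by simp
    have "degree E a \<le> max_degree V E" unfolding max_degree_def using fin aV by (intro Max_ge) auto
    hence D1: "max_degree V E \<ge> 1" using \<open>degree E a \<ge> 1\<close> by linarith
    have "max_degree V E \<in> insert 0 (degree E ` V)" unfolding max_degree_def using fin by (intro Max_in) auto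
    then obtain u where uV: "u \<in> V" and Du: "max_degree V E = degree E u" using D1 by auto
    define S where "S = {e\<in>E. u \<in> e}"
    define N where "N = E - S"
    have cS: "card S = max_degree V E" using Du unfolding S_def degree_def by simp
    have fS: "finite S" and fN: "finite N" using fE unfolding S_def N_def by auto
    have ESN: "E = S \<union> N" and dis: "S \<inter> N = {}" unfolding S_def N_def by auto
    have cE: "card E = card S + card N" using ESN dis fS fN by (simp add: card_Un_disjoint)
    have split: "\<And>h::'a set \<Rightarrow> nat. (\<Sum>e\<in>E. h e) = (\<Sum>e\<in>S. h e) + (\<Sum>e\<in>N. h e)"
      using ESN dis fS fN by (simp add: sum.union_disjoint)
    have T: "(\<Sum>e\<in>E. \<Sum>f\<in>E. ?g e f) = (\<Sum>e\<in>S. \<Sum>f\<in>S. ?g e f) + (\<Sum>e\<in>S. \<Sum>f\<in>N. ?g e f)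
       + (\<Sum>e\<in>N. \<Sum>f\<in>S. ?g e f) + (\<Sum>e\<in>N. \<Sum>f\<in>N. ?g e f)"
      by (simp add: split sum.distrib)
    have SS: "(\<Sum>e\<in>S. \<Sum>f\<in>S. ?g e f) \<le> card S * (card S + 1)"
      using fS E2 unfolding S_def by (intro block_bound) auto
    have NN: "(\<Sum>e\<in>N. \<Sum>f\<in>N. ?g e f) \<le> card N * (card N + 1)"
      using fN E2 unfolding N_def by (intro block_bound) auto
    have crossf: "(\<Sum>e\<in>S. ?g e f) \<le> 2" if "f \<in> N" for f
      using that unfolding S_def N_def by (intro cross_bound[OF fE E2]) auto
    have SN: "(\<Sum>e\<in>S. \<Sum>f\<in>N. ?g e f) \<le> 2 * card N"
    proof -
      have "(\<Sum>e\<in>S. \<Sum>f\<in>N. ?g e f) = (\<Sum>f\<in>N. \<Sum>e\<in>S. ?g e f)" by (rule sum.swap)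
      also have "\<dots> \<le> (\<Sum>f\<in>N. 2)" using crossf by (intro sum_mono) auto
      finally show ?thesis by simp
    qed
    have NS: "(\<Sum>e\<in>N. \<Sum>f\<in>S. ?g e f) \<le> 2 * card N"
    proof -
      have "(\<Sum>e\<in>N. \<Sum>f\<in>S. ?g e f) = (\<Sum>e\<in>N. \<Sum>f\<in>S. ?g f e)" by (simp add: Int_commute)
      also have "\<dots> \<le> (\<Sum>e\<in>N. 2)" using crossf by (intro sum_mono) auto
      finally show ?thesis by simp
    qed
    have B: "first_zagreb V E \<le> card S * (card S + 1) + 4 * card N + card N * (card N + 1)"
      using Z T SS NN SN NS by linarith
    define d where "d = int (card S)"
    define n where "n = int (card N)"
    have Bi: "int (first_zagreb V E) \<le> d * (d + 1) + 4 * n + n * (n + 1)"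
    proof -
      have "int (first_zagreb V E) \<le> int (card S * (card S + 1) + 4 * card N + card N * (card N + 1))"
        using B by (simp only: of_nat_le_iff)
      thus ?thesis unfolding d_def n_def by (simp add: algebra_simps)
    qed
    have m: "int (card E) = d + n" unfolding d_def n_def cE by simp
    have D: "int (max_degree V E) = d" unfolding d_def cS by simp
    have d1: "d \<ge> 1" using D D1 by linarith
    have n0: "n \<ge> 0" unfolding n_def by simp
    have "d * (d + 1) + 4 * n + n * (n + 1) \<le>
      max (2*d^2 + (d+n)^2 + (6 - 2*d)*(d+n) - 2*d - 4)
        (max (2*d^2 + (d+n)^2 + (4 - 2*d)*(d+n) + 4) ((d+n)*((d+n) - 1)))"
    proof (cases "n + 3 * d \<ge> 4")
      case True
      have "2*d^2 + (d+n)^2 + (6 - 2*d)*(d+n) - 2*d - 4 = d * (d + 1) + 4 * n + n * (n + 1) + (n + 3*d - 4)"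
        by (simp add: power2_eq_square algebra_simps)
      hence "d * (d + 1) + 4 * n + n * (n + 1) \<le> 2*d^2 + (d+n)^2 + (6 - 2*d)*(d+n) - 2*d - 4"
        using True by linarith
      thus ?thesis by linarith
    next
      case False
      have "2*d^2 + (d+n)^2 + (4 - 2*d)*(d+n) + 4 = d * (d + 1) + 4 * n + n * (n + 1) + (3*d - n + 4)"
        by (simp add: power2_eq_square algebra_simps)
      hence "d * (d + 1) + 4 * n + n * (n + 1) \<le> 2*d^2 + (d+n)^2 + (4 - 2*d)*(d+n) + 4"
        using False d1 n0 by linarith
      thus ?thesis by linarith
    qed
    thus ?thesis using Bi m D by (simp add: Let_def)
  qed
qed

end
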